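(* For the information exchange $\mathcal{E}$, failure model $SO_t$ and decision protocol $P'$ described in the context, $P'$ is an SBA protocol with respect to $\mathcal{E}$ and $SO_t$, i.e., in every run $r$ of $\mathcal{I}_{P',\mathcal{E},SO_t}$: (Unique-Decision) each agent performs an action $\mathtt{decide}_i(v)$ at most once; (Simultaneous-Agreement) if a nonfaulty agent $i$ performs $\mathtt{decide}_i(v)$ at time $m$ then every nonfaulty agent $j$ performs $\mathtt{decide}_j(v)$ at time $m$; (Validity) if a nonfaulty agent performs $\mathtt{decide}_i(v)$ then some agent has initial value $v$ in $r$.
   Context: Agents $\mathrm{Agt}=\{1,\dots,n\}$, a bound $t\le n$, decision values $V=\{0,1\}$, actions $A_i=\{\mathtt{noop},\mathtt{decide}_i(0),\mathtt{decide}_i(1)\}$. Information exchange $\mathcal{E}$: agent $i$'s local states are tuples $\langle\mathit{init}_i,\mathit{known}_i,\mathit{new}_i,\mathit{kfaulty}_i,\mathit{done}_i,\mathit{time}_i\rangle$ with $\mathit{init}_i\in\{0,1\}$, $\mathit{known}_i,\mathit{new}_i\subseteq\{0,1\}$, $\mathit{kfaulty}_i\subseteq\mathrm{Agt}$, $\mathit{done}_i\in\{0,1\}$, $\mathit{time}_i\in\mathbb{N}$; initial states have $\mathit{known}_i=\mathit{new}_i=\{\mathit{init}_i\}$, $\mathit{kfaulty}_i=\emptyset$, $\mathit{done}_i=\mathit{time}_i=0$. Messages are $\bot$ or pairs $\langle N,F\rangle$ with $N\subseteq\{0,1\}$, $F\subseteq\mathrm{Agt}$. In each round agent $i$ sends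 the same message to every agent $j\in\mathrm{Agt}$ (including itself): $\langle\emptyset,\emptyset\rangle$ if $\mathit{done}_i=1$ or its action is a $\mathtt{decide}$ action, and $\langle\mathit{new}_i,\mathit{kfaulty}_i\rangle$ otherwise. Update after action $a$ and receiving messages, where $J$ is the set of agents from which a (non-$\bot$) message $\langle N_j,F_j\rangle$ is received: $\mathit{init}$ unchanged; $\mathit{known}'_i=\mathit{known}_i\cup\bigcup_{j\in J}N_j$; $\mathit{new}'_i=\mathit{known}'_i\setminus\mathit{known}_i$; $\mathit{kfaulty}'_i=\mathit{kfaulty}_i\cup(\mathrm{Agt}\setminus J)\cup\bigcup_{j\in J}F_j$; $\mathit{done}'_i=1$ if $a$ is a $\mathtt{decide}$ action, else $\mathit{done}_i$; $\mathit{time}'_i=\mathit{time}_i+1$. Decision protocol $P'$: $P'_i(s)=\mathtt{decide}_i(v)$ if $\mathit{done}_i=0$, $v$ is the least element of $\mathit{known}_i$, and either $\mathit{time}_i=t+1$ or $\mathit{kfaulty}_i=\mathrm{Agt}\setminus\{i\}$; otherwise $P'_i(s)=\mathtt{noop}$. Failure model $SO_t$ (sending omissions): in each run there is a set of at most $t$ agents, and the only failures are that in any round, some messages sent by these agents (to any recipients, possibly themselves) may be lost (received as $\bot$); all other messages are delivered and local states evolve without perturbation. Runs of $\mathcal{I}_{P',\mathcal{E},SO_t}$ start from any combination of initial states and any such failure pattern; at each time $k$ each agent $i$ performs $P'_i$ of its current state, sends its messages, and updates its state from the messages it receives in round $k+1$. An agent is nonfaulty in a run if none of its messages is ever lost.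 *)

theory Defs
  imports Main
begin

definition Agt :: "nat \<Rightarrow> nat set" where
  "Agt n = {1..n}"

record lstate =
  s_init :: nat
  s_known :: "nat set"
  s_new :: "nat set"
  s_kfaulty :: "nat set"
  s_done :: nat
  s_time :: nat

datatype action = Noop | Decide nat

definition initial_state :: "nat \<Rightarrow> lstate" where
  "initial_state v = \<lparr>s_init = v, s_known = {v}, s_new = {v}, s_kfaulty = {},
                      s_done = 0, s_time = 0\<rparr>"

definition Pprime :: "nat \<Rightarrow> nat \<Rightarrow> nat \<Rightarrow> lstate \<Rightarrow> action" where
  "Pprime n t i s =
     (if s_done s = 0 \<and> (s_time s = t + 1 \<or> s_kfaulty s = Agt n - {i})
      then Decide (Min (s_known s)) else Noop)"

definition is_decide :: "action \<Rightarrow> bool" where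
  "is_decide a = (\<exists>v. a = Decide v)"

definition msg :: "lstate \<Rightarrow> action \<Rightarrow> nat set \<times> nat set" where
  "msg s a = (if s_done s = 1 \<or> is_decide a then ({}, {}) else (s_new s, s_kfaulty s))"

text \<open>State update; rcv j = None means the message from j was lost (bottom).\<close>
definition update :: "nat \<Rightarrow> lstate \<Rightarrow> action \<Rightarrow> (nat \<Rightarrow> (nat set \<times> nat set) option) \<Rightarrow> lstate" where
  "update n s a rcv =
     (let J = {j \<in> Agt n. rcv j \<noteq> None};
          known' = s_known s \<union> (\<Union>j\<in>J. fst (the (rcv j)))
      in \<lparr>s_init = s_init s,
          s_known = known',
          s_new = known' - s_known s,
          s_kfaulty = s_kfaulty s \<union> (Agt n - J) \<union> (\<Union>j\<in>J. snd (the (rcv j))),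
          s_done = (if is_decide a then 1 else s_done s),
          s_time = Suc (s_time s)\<rparr>)"

text \<open>Global state of the run at time k: ini gives initial values,
  lost k j i means the message sent by j to i in round k+1 (after time k) is lost.\<close>
primrec run_states :: "nat \<Rightarrow> nat \<Rightarrow> (nat \<Rightarrow> nat) \<Rightarrow> (nat \<Rightarrow> nat \<Rightarrow> nat \<Rightarrow> bool)
                         \<Rightarrow> nat \<Rightarrow> nat \<Rightarrow> lstate" where
  "run_states n t ini lost 0 = (\<lambda>i. initial_state (ini i))"
| "run_states n t ini lost (Suc k) =
     (\<lambda>i. update n (run_states n t ini lost k i)
                    (Pprime n t i (run_states n t ini lost k i))
                    (\<lambda>j. if lost k j i then None
                         else Some (msg (run_states n t ini lost k j)
                                        (Pprime n t j (run_states n t ini lost k j)))))"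

definition run_action :: "nat \<Rightarrow> nat \<Rightarrow> (nat \<Rightarrow> nat) \<Rightarrow> (nat \<Rightarrow> nat \<Rightarrow> nat \<Rightarrow> bool)
                         \<Rightarrow> nat \<Rightarrow> nat \<Rightarrow> action" where
  "run_action n t ini lost k i = Pprime n t i (run_states n t ini lost k i)"

definition SO :: "nat \<Rightarrow> nat \<Rightarrow> (nat \<Rightarrow> nat \<Rightarrow> nat \<Rightarrow> bool) \<Rightarrow> bool" where
  "SO n t lost = (\<exists>F \<subseteq> Agt n. card F \<le> t \<and> (\<forall>k j i. lost k j i \<longrightarrow> j \<in> F))"

definition nonfaulty :: "nat \<Rightarrow> (nat \<Rightarrow> nat \<Rightarrow> nat \<Rightarrow> bool) \<Rightarrow> nat \<Rightarrow> bool" where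
  "nonfaulty n lost i = (\<forall>k. \<forall>j \<in> Agt n. \<not> lost k i j)"

end

theory Submission
  imports Defs
begin

lemma upd_fields:
  "s_known (update n s a rcv) = s_known s \<union> (\<Union>j\<in>{j\<in>Agt n. rcv j \<noteq> None}. fst (the (rcv j)))"
  "s_new (update n s a rcv) = s_known (update n s a rcv) - s_known s"
  "s_kfaulty (update n s a rcv) = s_kfaulty s \<union> (Agt n - {j\<in>Agt n. rcv j \<noteq> None}) \<union> (\<Union>j\<in>{j\<in>Agt n. rcv j \<noteq> None}. snd (the (rcv j)))"
  "s_done (update n s a rcv) = (if is_decide a then 1 else s_done s)"
  "s_time (update n s a rcv) = Suc (s_time s)"
  by (simp_all add: update_def Let_def)

lemma J_eq: "{j \<in> Agt n. (if lost k j i then None else Some (f j)) \<noteq> None} = {j \<in> Agt n. \<not> lost k j i}"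
  by auto

lemma UN_eq: "(\<Union>j\<in>{j \<in> Agt n. \<not> lost k j i}. g (the (if lost k j i then None else Some (f j))))
   = (\<Union>j\<in>{j \<in> Agt n. \<not> lost k j i}. g (f j))"
  by auto

lemma st_time[simp]: "s_time (run_states n t ini lost k i) = k"
  by (induction k arbitrary: i) (auto simp: initial_state_def upd_fields)

lemma st_known_Suc: "s_known (run_states n t ini lost (Suc k) i) =
   s_known (run_states n t ini lost k i) \<union>
   (\<Union>j\<in>{j \<in> Agt n. \<not> lost k j i}. fst (msg (run_states n t ini lost k j) (Pprime n t j (run_states n t ini lost k j))))"
  unfolding run_states.simps upd_fields by (auto split: if_splits)

lemma st_new_Suc: "s_new (run_states n t ini lost (Suc k) i) =
   s_known (run_states n t ini lost (Suc k) i) - s_known (run_states n t ini lost k i)"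
  unfolding run_states.simps upd_fields by (auto split: if_splits)

lemma st_kf_Suc: "s_kfaulty (run_states n t ini lost (Suc k) i) =
   s_kfaulty (run_states n t ini lost k i) \<union> (Agt n - {j \<in> Agt n. \<not> lost k j i}) \<union>
   (\<Union>j\<in>{j \<in> Agt n. \<not> lost k j i}. snd (msg (run_states n t ini lost k j) (Pprime n t j (run_states n t ini lost k j))))"
  unfolding run_states.simps upd_fields by (auto split: if_splits)

lemma st_done_Suc: "s_done (run_states n t ini lost (Suc k) i) =
   (if is_decide (Pprime n t i (run_states n t ini lost k i)) then 1 else s_done (run_states n t ini lost k i))"
  unfolding run_states.simps upd_fields ..

lemma st_0: "s_known (run_states n t ini lost 0 i) = {ini i}" "s_new (run_states n t ini lost 0 i) = {ini i}"
  "s_kfaulty (run_states n t ini lost 0 i) = {}" "s_done (run_states n t ini lost 0 i) = 0"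
  by (auto simp: initial_state_def)

declare run_states.simps[simp del]

lemma new_sub_known: "s_new (run_states n t ini lost k i) \<subseteq> s_known (run_states n t ini lost k i)"
  by (cases k) (auto simp: st_0 st_new_Suc)

lemma known_mono: "k \<le> k' \<Longrightarrow> s_known (run_states n t ini lost k i) \<subseteq> s_known (run_states n t ini lost k' i)"
proof (induction k' rule: dec_induct)
  case (step m) then show ?case using st_known_Suc[of n t ini lost m i] by blast
qed simp

lemma done_mono: "k \<le> k' \<Longrightarrow> s_done (run_states n t ini lost k i) \<noteq> 0 \<Longrightarrow> s_done (run_states n t ini lost k' i) \<noteq> 0"
proof (induction k' rule: dec_induct)
  case (step m) then show ?case using st_done_Suc[of n t ini lost m i] by auto
qed simp

lemma known_new: "v \<in> s_known (run_states n t ini lost k i) \<Longrightarrow> \<exists>k'\<le>k. v \<in> s_new (run_states n t ini lost k' i)"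
proof (induction k)
  case 0 then show ?case by (simp add: st_0)
next
  case (Suc k)
  show ?case
  proof (cases "v \<in> s_known (run_states n t ini lost k i)")
    case True then show ?thesis using Suc.IH le_SucI by blast
  next
    case False then show ?thesis using Suc.prems by (auto simp: st_new_Suc)
  qed
qed

lemma msg_fst: "v \<in> fst (msg s a) \<Longrightarrow> v \<in> s_new s"
  by (auto simp: msg_def split: if_splits)

lemma msg_snd: "x \<in> snd (msg s a) \<Longrightarrow> x \<in> s_kfaulty s"
  by (auto simp: msg_def split: if_splits)

lemma known_valid: "s_known (run_states n t ini lost k i) \<subseteq> insert (ini i) (ini ` Agt n)"
proof (induction k arbitrary: i)
  case 0 then show ?case by (simp add: st_0)
next
  case (Suc k)
  show ?case
  proof
    fix v assume "v \<in> s_known (run_states n t ini lost (Suc k) i)"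
    then consider "v \<in> s_known (run_states n t ini lost k i)"
      | j where "j \<in> Agt n" "v \<in> s_known (run_states n t ini lost k j)"
      using st_known_Suc[of n t ini lost k i] msg_fst new_sub_known by blast
    then show "v \<in> insert (ini i) (ini ` Agt n)"
      using Suc.IH by cases blast+
  qed
qed

definition Bad :: "nat \<Rightarrow> (nat \<Rightarrow> nat \<Rightarrow> nat \<Rightarrow> bool) \<Rightarrow> nat set" where
  "Bad n lost = {x. \<exists>k y. y \<in> Agt n \<and> lost k x y}"

lemma kf_bad: "i \<in> Agt n \<Longrightarrow> s_kfaulty (run_states n t ini lost k i) \<subseteq> Bad n lost"
proof (induction k arbitrary: i)
  case 0 then show ?case by (simp add: st_0)
next
  case (Suc k)
  show ?case using Suc.IH Suc.prems
    by (auto simp: st_kf_Suc Bad_def dest!: msg_snd)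
qed

lemma nonfaulty_bad: "nonfaulty n lost x \<longleftrightarrow> x \<notin> Bad n lost"
  by (auto simp: nonfaulty_def Bad_def)

lemma chain:
  assumes "x \<in> Agt n" "v \<in> s_new (run_states n t ini lost k x)"
    "y \<in> Agt n" "nonfaulty n lost y" "v \<notin> s_known (run_states n t ini lost k y)"
  shows "\<exists>C. finite C \<and> C \<subseteq> Bad n lost \<and> card C = k \<and> x \<notin> C \<and>
      (\<forall>c\<in>C. v \<in> s_known (run_states n t ini lost k c))"
  using assms
proof (induction k arbitrary: x)
  case 0 show ?case by (rule exI[of _ "{}"]) simp
next
  case (Suc k)
  have ny: "v \<notin> s_known (run_states n t ini lost k y)"
    using Suc.prems(5) known_mono[of k "Suc k" n t ini lost y] le_SucI by blast
  from Suc.prems(2) have nx: "v \<notin> s_known (run_states n t ini lost k x)"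
    and "v \<in> s_known (run_states n t ini lost (Suc k) x)" using st_new_Suc[of n t ini lost k x] by blast+
  then obtain j where j: "j \<in> Agt n" "\<not> lost k j x"
    "v \<in> fst (msg (run_states n t ini lost k j) (Pprime n t j (run_states n t ini lost k j)))"
    using st_known_Suc[of n t ini lost k x] by blast
  then have jn: "v \<in> s_new (run_states n t ini lost k j)" by (blast dest: msg_fst)
  from Suc.IH[OF j(1) jn Suc.prems(3,4) ny] obtain C where
    C: "finite C" "C \<subseteq> Bad n lost" "card C = k" "j \<notin> C" "\<forall>c\<in>C. v \<in> s_known (run_states n t ini lost k c)"
    by blast
  have jb: "j \<in> Bad n lost"
  proof (rule ccontr)
    assume "j \<notin> Bad n lost"
    then have "\<not> lost k j y" using Suc.prems(3) unfolding Bad_def by blast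
    then have "v \<in> s_known (run_states n t ini lost (Suc k) y)"
      using j(1,3) st_known_Suc[of n t ini lost k y] by blast
    then show False using Suc.prems(5) by blast
  qed
  have jk: "v \<in> s_known (run_states n t ini lost k j)" using jn new_sub_known by blast
  show ?case
  proof (intro exI conjI)
    show "finite (insert j C)" using C by simp
    show "insert j C \<subseteq> Bad n lost" using C jb by blast
    show "card (insert j C) = Suc k" using C by simp
    show "x \<notin> insert j C" using C(5) nx jk by blast
    show "\<forall>c\<in>insert j C. v \<in> s_known (run_states n t ini lost (Suc k) c)"
      using C(5) jk known_mono[of k "Suc k" n t ini lost] le_SucI by blast
  qed
qed



lemma Pprime_Decide: "Pprime n t i s = Decide v \<longleftrightarrow>
   s_done s = 0 \<and> (s_time s = t + 1 \<or> s_kfaulty s = Agt n - {i}) \<and> v = Min (s_known s)"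
  by (auto simp: Pprime_def)

lemma Pprime_dec: "is_decide (Pprime n t i s) \<longleftrightarrow>
   s_done s = 0 \<and> (s_time s = t + 1 \<or> s_kfaulty s = Agt n - {i})"
  by (auto simp: Pprime_def is_decide_def)

lemma no_early:
  assumes "x \<in> Agt n" "z \<in> Agt n" "z \<noteq> x" "nonfaulty n lost z"
  shows "s_kfaulty (run_states n t ini lost k x) \<noteq> Agt n - {x}"
proof
  assume "s_kfaulty (run_states n t ini lost k x) = Agt n - {x}"
  then have "z \<in> Bad n lost" using kf_bad[OF assms(1), of t ini lost k] assms(2,3) by blast
  then show False using assms(4) nonfaulty_bad by blast
qed

lemma done0:
  assumes "x \<in> Agt n" "z \<in> Agt n" "z \<noteq> x" "nonfaulty n lost z"
  shows "k \<le> t + 1 \<Longrightarrow> s_done (run_states n t ini lost k x) = 0"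
proof (induction k)
  case 0 then show ?case by (simp add: st_0)
next
  case (Suc k)
  then show ?case using no_early[OF assms, of t ini k]
    by (simp add: st_done_Suc Pprime_dec)
qed

theorem proposition17:
  fixes n t :: nat and ini :: "nat \<Rightarrow> nat" and lost :: "nat \<Rightarrow> nat \<Rightarrow> nat \<Rightarrow> bool"
  assumes "t \<le> n"
    and "\<forall>i \<in> Agt n. ini i \<in> {0, 1}"
    and "SO n t lost"
  shows "(\<forall>i \<in> Agt n. \<forall>m m' v v'. run_action n t ini lost m i = Decide v \<and>
                                  run_action n t ini lost m' i = Decide v' \<longrightarrow> m = m')
       \<and> (\<forall>i \<in> Agt n. \<forall>j \<in> Agt n. \<forall>m v. nonfaulty n lost i \<and> nonfaulty n lost j \<and>
              run_action n t ini lost m i = Decide v \<longrightarrow> run_action n t ini lost m j = Decide v)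
       \<and> (\<forall>i \<in> Agt n. \<forall>m v. nonfaulty n lost i \<and> run_action n t ini lost m i = Decide v
              \<longrightarrow> (\<exists>j \<in> Agt n. ini j = v))"
proof (intro conjI)
  let ?s = "run_states n t ini lost"
  have dec_later: "s_done (?s m' i) \<noteq> 0" if "run_action n t ini lost m i = Decide v" "m < m'" for i m m' v
  proof -
    have "is_decide (Pprime n t i (?s m i))" using that(1) by (simp add: run_action_def is_decide_def)
    then have "s_done (?s (Suc m) i) \<noteq> 0" by (simp add: st_done_Suc)
    then show ?thesis using done_mono[of "Suc m" m'] that(2) by simp
  qed
  show "\<forall>i \<in> Agt n. \<forall>m m' v v'. run_action n t ini lost m i = Decide v \<and>
          run_action n t ini lost m' i = Decide v' \<longrightarrow> m = m'"
  proof (intro ballI allI impI)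
    fix i m m' v v'
    assume a: "run_action n t ini lost m i = Decide v \<and> run_action n t ini lost m' i = Decide v'"
    have d: "s_done (?s m i) = 0" "s_done (?s m' i) = 0"
      using a by (auto simp: run_action_def Pprime_Decide)
    show "m = m'"
    proof (rule ccontr)
      assume "m \<noteq> m'"
      then consider "m < m'" | "m' < m" by linarith
      then show False using dec_later a d by cases blast+
    qed
  qed
  show "\<forall>i \<in> Agt n. \<forall>m v. nonfaulty n lost i \<and> run_action n t ini lost m i = Decide v
              \<longrightarrow> (\<exists>j \<in> Agt n. ini j = v)"
  proof (intro ballI allI impI)
    fix i m v assume i: "i \<in> Agt n" and a: "nonfaulty n lost i \<and> run_action n t ini lost m i = Decide v"
    then have v: "v = Min (s_known (?s m i))" by (simp add: run_action_def Pprime_Decide)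
    have sub: "s_known (?s m i) \<subseteq> insert (ini i) (ini ` Agt n)" by (rule known_valid)
    have "ini i \<in> s_known (?s m i)" using known_mono[of 0 m n t ini lost i] by (simp add: st_0)
    then have "v \<in> s_known (?s m i)" unfolding v
      using finite_subset[OF sub] by (intro Min_in) (auto simp: Agt_def)
    then show "\<exists>j \<in> Agt n. ini j = v" using sub i by blast
  qed
  obtain F where F: "F \<subseteq> Agt n" "card F \<le> t" "\<forall>k j i. lost k j i \<longrightarrow> j \<in> F"
    using assms(3) by (auto simp: SO_def)
  have finF: "finite F" using F(1) finite_subset by (auto simp: Agt_def)
  have BF: "Bad n lost \<subseteq> F" using F(3) by (auto simp: Bad_def)
  have K: "v \<in> s_known (?s (t+1) j)"
    if ij: "i \<in> Agt n" "j \<in> Agt n" "i \<noteq> j" "nonfaulty n lost i" "nonfaulty n lost j"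
      and v: "v \<in> s_known (?s (t+1) i)" for i j v
  proof -
    obtain k where k: "k \<le> t + 1" "v \<in> s_new (?s k i)" using known_new[OF v] by blast
    show ?thesis
    proof (cases "k = t + 1")
      case True
      show ?thesis
      proof (rule ccontr)
        assume "v \<notin> s_known (?s (t+1) j)"
        then obtain C where C: "finite C" "C \<subseteq> Bad n lost" "card C = t + 1"
          using chain[OF ij(1) k(2)[unfolded True] ij(2) ij(5)] by blast
        have "card C \<le> card F" using C(2) BF finF by (intro card_mono) auto
        then show False using C(3) F(2) by simp
      qed
    next
      case False
      then have kt: "k \<le> t" using k(1) by simp
      have d: "s_done (?s k i) = 0" using done0[OF ij(1) ij(2) ij(3)[symmetric] ij(5)] k(1) by blast
      have nd: "\<not> is_decide (Pprime n t i (?s k i))"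
        using kt no_early[OF ij(1) ij(2) ij(3)[symmetric] ij(5)] by (simp add: Pprime_dec)
      have m: "fst (msg (?s k i) (Pprime n t i (?s k i))) = s_new (?s k i)"
        using d nd by (simp add: msg_def)
      have nl: "\<not> lost k i j" using ij(2,4) by (auto simp: nonfaulty_def)
      have "v \<in> s_known (?s (Suc k) j)"
        using st_known_Suc[of n t ini lost k j] ij(1) nl m k(2) by blast
      then show ?thesis using known_mono[of "Suc k" "t+1" n t ini lost j] kt by auto
    qed
  qed
  show "\<forall>i \<in> Agt n. \<forall>j \<in> Agt n. \<forall>m v. nonfaulty n lost i \<and> nonfaulty n lost j \<and>
              run_action n t ini lost m i = Decide v \<longrightarrow> run_action n t ini lost m j = Decide v"
  proof (intro ballI allI impI)
    fix i j m v
    assume i: "i \<in> Agt n" and j: "j \<in> Agt n"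
      and a: "nonfaulty n lost i \<and> nonfaulty n lost j \<and> run_action n t ini lost m i = Decide v"
    show "run_action n t ini lost m j = Decide v"
    proof (cases "i = j")
      case True then show ?thesis using a by simp
    next
      case False
      have ai: "s_done (?s m i) = 0" "s_time (?s m i) = t + 1 \<or> s_kfaulty (?s m i) = Agt n - {i}"
          "v = Min (s_known (?s m i))"
        using a by (simp_all add: run_action_def Pprime_Decide)
      have mt: "m = t + 1" using ai(2) no_early[OF i j False[symmetric]] a by auto
      have dj: "s_done (?s m j) = 0" using done0[OF j i False, of lost m t ini] a mt by simp
      have eq: "s_known (?s m j) = s_known (?s m i)"
        using K[OF i j False] K[OF j i False[symmetric]] a mt by blast
      show ?thesis using dj eq ai(3) mt
        by (simp add: run_action_def Pprime_Decide)
    qed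
  qed
qed

end
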